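(* Let $b \ge 1$, $d=b+1$, $n=2b$, and let $f,g:\mathbb{F}_2^d\to\mathbb{F}_2$ be bipermutive local rules that are both nonlinear (algebraic degree at least $2$) and such that the no-boundary CA $F,G:\mathbb{F}_2^{2b}\to\mathbb{F}_2^b$ they define form a pair of orthogonal CA. Let $H:\mathbb{F}_2^n\to\mathbb{F}_2^n$ be the superposition S-box of $F$ and $G$. If $v\in\mathbb{F}_2^n\setminus\{\underline 0\}$ satisfies $nl(v\cdot H)=0$, then $supp(v)$ contains at least one index in $\{1,\dots,b\}$ and at least one index in $\{b+1,\dots,n\}$.
   Context: A local rule $f:\mathbb{F}_2^d\to\mathbb{F}_2$ with $d\ge 2$ is bipermutive if $f(x_1,\dots,x_d)=x_1\oplus \varphi(x_2,\dots,x_{d-1})\oplus x_d$ for some $\varphi:\mathbb{F}_2^{d-2}\to\mathbb{F}_2$. For $b=d-1$, the no-boundary CA with local rule $f$ is $F:\mathbb{F}_2^{2b}\to\mathbb{F}_2^b$, $F(x)_i=f(x_i,\dots,x_{i+b})$ for $i=1,\dots,b$. Such an $F$ defines a $2^b\times 2^b$ Latin square whose entry at row $x\in\mathbb{F}_2^b$ and column $y\in\mathbb{F}_2^b$ is $F(x\|y)$ ($\|$ = concatenation). Two such CA $F,G$ (with bipermutive rules $f,g$ of the same diameter) are orthogonal (an OCA pair) if their Latin squares are orthogonal, i.e. the map $(x,y)\mapsto (F(x\|y),G(x\|y))$ is a bijection of $\mathbb{F}_2^b\times\mathbb{F}_2^b$. The superposition S-box is $H(x)=F(x)\|G(x)$,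 i.e. $H(x)_i=f(x_i,\dots,x_{i+b})$ and $H(x)_{b+i}=g(x_i,\dots,x_{i+b})$ for $i=1,\dots,b$. For $v\in\mathbb{F}_2^n\setminus\{\underline 0\}$, $v\cdot H(x)=\bigoplus_i v_iH(x)_i$; $supp(v)=\{i: v_i\ne 0\}$. $nl(h)$ denotes the minimum Hamming distance of the Boolean function $h$ to the affine functions, so $nl(h)=0$ iff $h$ is affine. *)

theory Defs
  imports Main
begin

text \<open>Elements of F_2 are booleans (True = 1), addition is xor.
  A vector of F_2^m is a bool list of length m, indexed 0..m-1
  (index i here corresponds to index i+1 in the paper).
  A Boolean function on F_2^m is a map bool list => bool, considered on lists of length m.\<close>

definition vecs :: "nat \<Rightarrow> bool list set" where
  "vecs m = {x. length x = m}"

text \<open>Algebraic normal form: f has algebraic degree at most k iff it has an ANF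
  (coefficients a_S for S subset of the variables) using only monomials of size at most k.\<close>
definition alg_deg_le :: "nat \<Rightarrow> (bool list \<Rightarrow> bool) \<Rightarrow> nat \<Rightarrow> bool" where
  "alg_deg_le m f k \<longleftrightarrow> (\<exists>a :: nat set \<Rightarrow> bool.
      (\<forall>S. a S \<longrightarrow> S \<subseteq> {..<m} \<and> card S \<le> k) \<and>
      (\<forall>x\<in>vecs m. f x = odd (card {S. S \<subseteq> {..<m} \<and> a S \<and> (\<forall>i\<in>S. x ! i)})))"

definition alg_degree :: "nat \<Rightarrow> (bool list \<Rightarrow> bool) \<Rightarrow> nat" where
  "alg_degree m f = (LEAST k. alg_deg_le m f k)"

definition bipermutive :: "nat \<Rightarrow> (bool list \<Rightarrow> bool) \<Rightarrow> bool" where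
  "bipermutive d f \<longleftrightarrow> 2 \<le> d \<and> (\<exists>\<phi> :: bool list \<Rightarrow> bool.
      \<forall>x\<in>vecs d. f x = ((x ! 0 \<noteq> \<phi> (take (d - 2) (drop 1 x))) \<noteq> x ! (d - 1)))"

definition nbca :: "nat \<Rightarrow> (bool list \<Rightarrow> bool) \<Rightarrow> bool list \<Rightarrow> bool list" where
  "nbca b f x = map (\<lambda>i. f (take (b + 1) (drop i x))) [0..<b]"

definition orthogonal_ca :: "nat \<Rightarrow> (bool list \<Rightarrow> bool) \<Rightarrow> (bool list \<Rightarrow> bool) \<Rightarrow> bool" where
  "orthogonal_ca b f g \<longleftrightarrow>
     bij_betw (\<lambda>(x, y). (nbca b f (x @ y), nbca b g (x @ y)))
              (vecs b \<times> vecs b) (vecs b \<times> vecs b)"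

definition sbox :: "nat \<Rightarrow> (bool list \<Rightarrow> bool) \<Rightarrow> (bool list \<Rightarrow> bool) \<Rightarrow> bool list \<Rightarrow> bool list" where
  "sbox b f g x = nbca b f x @ nbca b g x"

definition component :: "nat \<Rightarrow> bool list \<Rightarrow> (bool list \<Rightarrow> bool list) \<Rightarrow> bool list \<Rightarrow> bool" where
  "component n v H x = odd (card {i. i < n \<and> v ! i \<and> H x ! i})"

definition affine_fun :: "nat \<Rightarrow> (bool list \<Rightarrow> bool) \<Rightarrow> bool" where
  "affine_fun m h \<longleftrightarrow> (\<exists>(a0::bool) (a::nat \<Rightarrow> bool).
      \<forall>x\<in>vecs m. h x = (a0 \<noteq> odd (card {i. i < m \<and> a i \<and> x ! i})))"

definition nl :: "nat \<Rightarrow> (bool list \<Rightarrow> bool) \<Rightarrow> nat" where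
  "nl m h = Min {card {x\<in>vecs m. h x \<noteq> l x} | l. affine_fun m l}"

end

theory Submission
  imports Defs
begin

definition flip :: "nat \<Rightarrow> bool list \<Rightarrow> bool list" where
  "flip j x = x[j := \<not> x ! j]"

definition D2 :: "(bool list \<Rightarrow> bool) \<Rightarrow> nat \<Rightarrow> nat \<Rightarrow> bool list \<Rightarrow> bool" where
  "D2 u j k z = ((u z \<noteq> u (flip j z)) \<noteq> (u (flip k z) \<noteq> u (flip k (flip j z))))"

lemma length_flip[simp]: "length (flip j x) = length x"
  by (simp add: flip_def)

lemma flip_flip[simp]: "flip j (flip j x) = x"
  by (cases "j < length x") (simp_all add: flip_def list_update_beyond)

lemma flip_comm: "j \<noteq> k \<Longrightarrow> flip j (flip k x) = flip k (flip j x)"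
  by (simp add: flip_def list_update_swap)

lemma nth_flip: "flip j x ! i = (if i = j \<and> j < length x then \<not> x ! i else x ! i)"
  by (cases "j < length x") (auto simp: flip_def nth_list_update list_update_beyond)

lemma D2_sym: "j \<noteq> k \<Longrightarrow> D2 u j k z = D2 u k j z"
  unfolding D2_def using flip_comm[of j k z] by auto

lemma card_insert_par:
  assumes "finite F" "x \<notin> F"
  shows "card {i \<in> insert x F. P i} = (if P x then Suc (card {i\<in>F. P i}) else card {i\<in>F. P i})"
proof -
  have "{i \<in> insert x F. P i} = (if P x then insert x {i\<in>F. P i} else {i\<in>F. P i})" by auto
  then show ?thesis using assms by auto
qed

lemma par_xor:
  assumes "finite A"
  shows "(odd (card {i\<in>A. P i}) \<noteq> odd (card {i\<in>A. Q i})) = odd (card {i\<in>A. P i \<noteq> Q i})"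
  using assms
proof (induction A rule: finite_induct)
  case empty then show ?case by simp
next
  case (insert x F)
  show ?case
    unfolding card_insert_par[OF insert.hyps] card_insert_par[OF insert.hyps, of "\<lambda>i. P i \<noteq> Q i"]
    using insert.IH by auto
qed

lemma flip_par:
  assumes "j < m" "length x = m"
  shows "odd (card {i. i<m \<and> a i \<and> flip j x ! i}) = (odd (card {i. i<m \<and> a i \<and> x!i}) \<noteq> a j)"
proof -
  define A where "A = {i. i<m \<and> i\<noteq>j \<and> a i \<and> x!i}"
  have fA: "finite A" "j \<notin> A" unfolding A_def by auto
  have e1: "{i. i<m \<and> a i \<and> x!i} = (if a j \<and> x!j then insert j A else A)"
    unfolding A_def using assms by auto
  have e2: "{i. i<m \<and> a i \<and> flip j x ! i} = (if a j \<and> \<not> x!j then insert j A else A)"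
    unfolding A_def using assms by (auto simp: nth_flip)
  show ?thesis unfolding e1 e2 using fA by auto
qed

lemma affine_D2:
  assumes "affine_fun m h" "length x = m" "j < m" "k < m" "j \<noteq> k"
  shows "\<not> D2 h j k x"
proof -
  obtain a0 a where h: "\<forall>x\<in>vecs m. h x = (a0 \<noteq> odd (card {i. i < m \<and> a i \<and> x ! i}))"
    using assms(1) unfolding affine_fun_def by blast
  let ?p = "\<lambda>x. odd (card {i. i < m \<and> a i \<and> x ! i})"
  have hh: "\<And>y. length y = m \<Longrightarrow> h y = (a0 \<noteq> ?p y)" using h by (simp add: vecs_def)
  have p1: "?p (flip j x) = (?p x \<noteq> a j)" using flip_par[of j m x a] assms by blast
  have p2: "?p (flip k x) = (?p x \<noteq> a k)" using flip_par[of k m x a] assms by blast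
  have p3: "?p (flip k (flip j x)) = (?p (flip j x) \<noteq> a k)" using flip_par[of k m "flip j x" a] assms by simp
  have "h x = (a0 \<noteq> ?p x)" using hh assms(2) .
  moreover have "h (flip j x) = (a0 \<noteq> ?p (flip j x))" using hh assms(2) by simp
  moreover have "h (flip k x) = (a0 \<noteq> ?p (flip k x))" using hh assms(2) by simp
  moreover have "h (flip k (flip j x)) = (a0 \<noteq> ?p (flip k (flip j x)))" using hh assms(2) by simp
  ultimately show ?thesis unfolding D2_def using p1 p2 p3 by argo
qed

lemma cnt_flip_less:
  assumes "length x = m" "k < m" "x ! k"
  shows "card {i. i<m \<and> flip k x ! i} < card {i. i<m \<and> x ! i}"
proof (rule psubset_card_mono)
  show "finite {i. i<m \<and> x ! i}" by simp
  show "{i. i<m \<and> flip k x ! i} \<subset> {i. i<m \<and> x ! i}"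
    using assms by (auto simp: nth_flip split: if_splits)
qed

lemma D2_zero_affine:
  assumes H: "\<forall>x\<in>vecs m. \<forall>j k. j<k \<longrightarrow> k<m \<longrightarrow> \<not> D2 h j k x"
  shows "affine_fun m h"
proof -
  define z0 where "z0 = replicate m False"
  define h0 where "h0 = h z0"
  define c where "c i = (h (flip i z0) \<noteq> h0)" for i
  define C where "C x = odd (card {i. i<m \<and> c i \<and> x!i})" for x
  have Hs: "\<not> D2 h j k x" if "length x = m" "j < m" "k < m" "j \<noteq> k" for x j k
  proof (cases "j < k")
    case True then show ?thesis using H that by (auto simp: vecs_def)
  next
    case False then have "k < j" using that by simp
    then show ?thesis using H that D2_sym[of j k h x] by (auto simp: vecs_def)
  qed
  have Cf: "C (flip k x) = (C x \<noteq> c k)" if "length x = m" "k < m" for x k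
    unfolding C_def using flip_par[OF that(2) that(1)] .
  have main: "\<forall>x. length x = m \<longrightarrow> card {i. i<m \<and> x!i} = n \<longrightarrow> h x = (h0 \<noteq> C x)" for n
  proof (induction n rule: less_induct)
    case (less n)
    show ?case
    proof (intro allI impI)
      fix x assume lx: "length x = m" and cx: "card {i. i<m \<and> x!i} = n"
      show "h x = (h0 \<noteq> C x)"
      proof (cases "\<exists>k<m. x ! k")
        case False
        then have "x = z0" unfolding z0_def using lx by (auto intro: nth_equalityI)
        moreover have e0: "{i. i<m \<and> c i \<and> z0!i} = {}" unfolding z0_def by auto
        have "\<not> C z0" unfolding C_def e0 by simp
        ultimately show ?thesis unfolding h0_def by simp
      next
        case True
        then obtain k where k: "k < m" "x ! k" by blast
        show ?thesis
        proof (cases "\<exists>j<m. flip k x ! j")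
          case False
          then have "flip k x = z0" unfolding z0_def using lx by (auto intro: nth_equalityI)
          then have xk: "x = flip k z0" by (metis flip_flip)
          have lz: "length z0 = m" unfolding z0_def by simp
          have e0: "{i. i<m \<and> c i \<and> z0!i} = {}" unfolding z0_def by auto
        have "\<not> C z0" unfolding C_def e0 by simp
          then have "C x = c k" using Cf[OF lz k(1)] xk by simp
          then show ?thesis unfolding c_def using xk by auto
        next
          case True
          then obtain j where j: "j < m" "flip k x ! j" by blast
          then have jk: "j \<noteq> k" using k lx by (auto simp: nth_flip)
          have xj: "x ! j" using j jk by (simp add: nth_flip)
          define y where "y = flip j (flip k x)"
          have l1: "length (flip k x) = m" "length (flip j x) = m" "length y = m"
            using lx by (auto simp: y_def)
          have c1: "card {i. i<m \<and> flip k x!i} < n" using cnt_flip_less[OF lx k] cx by simp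
          have c2: "card {i. i<m \<and> flip j x!i} < n" using cnt_flip_less[OF lx j(1) xj] cx by simp
          have c3: "card {i. i<m \<and> y!i} < n" unfolding y_def
            using cnt_flip_less[OF l1(1) j] c1 by simp
          have i1: "h (flip k x) = (h0 \<noteq> C (flip k x))" using less.IH[OF c1] l1 by blast
          have i2: "h (flip j x) = (h0 \<noteq> C (flip j x))" using less.IH[OF c2] l1 by blast
          have i3: "h y = (h0 \<noteq> C y)" using less.IH[OF c3] l1 by blast
          have e1: "flip j y = flip k x" unfolding y_def by simp
          have e2: "flip k y = flip j x" unfolding y_def using flip_comm[OF jk, of "flip k x"] by simp
          have e3: "flip k (flip j y) = x" using e1 by simp
          have "\<not> D2 h j k y" using Hs[OF l1(3) j(1) k(1) jk] .
          then have d: "h x = ((h y \<noteq> h (flip k x)) \<noteq> h (flip j x))"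
            unfolding D2_def e1 e2 flip_flip by argo
          have f1: "C (flip k x) = (C x \<noteq> c k)" using Cf[OF lx k(1)] .
          have f2: "C (flip j x) = (C x \<noteq> c j)" using Cf[OF lx j(1)] .
          have f3: "C y = (C (flip k x) \<noteq> c j)" unfolding y_def using Cf[OF l1(1) j(1)] .
          show ?thesis using d i1 i2 i3 f1 f2 f3 by argo
        qed
      qed
    qed
  qed
  show ?thesis unfolding affine_fun_def
  proof (intro exI ballI)
    fix x assume "x \<in> vecs m"
    then show "h x = (h0 \<noteq> odd (card {i. i < m \<and> c i \<and> x ! i}))"
      using main unfolding vecs_def C_def by blast
  qed
qed

lemma affine_deg1:
  assumes "affine_fun m h"
  shows "alg_deg_le m h 1"
proof -
  obtain a0 a where h: "\<forall>x\<in>vecs m. h x = (a0 \<noteq> odd (card {i. i < m \<and> a i \<and> x ! i}))"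
    using assms unfolding affine_fun_def by blast
  define a' where "a' S = ((S = {} \<and> a0) \<or> (\<exists>i<m. S = {i} \<and> a i))" for S :: "nat set"
  show ?thesis unfolding alg_deg_le_def
  proof (rule exI[of _ a'], rule conjI)
    show "\<forall>S. a' S \<longrightarrow> S \<subseteq> {..<m} \<and> card S \<le> 1" unfolding a'_def by auto
  next
    show "\<forall>x\<in>vecs m. h x = odd (card {S. S \<subseteq> {..<m} \<and> a' S \<and> (\<forall>i\<in>S. x ! i)})"
    proof
    fix x assume x: "x \<in> vecs m"
    define B where "B = {i. i < m \<and> a i \<and> x ! i}"
    have eq: "{S. S \<subseteq> {..<m} \<and> a' S \<and> (\<forall>i\<in>S. x ! i)} =
       (if a0 then {{}} else {}) \<union> (\<lambda>i. {i}) ` B"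
      unfolding a'_def B_def by auto
    have fB: "finite B" unfolding B_def by simp
    have cB: "card ((\<lambda>i. {i}) ` B) = card B" by (rule card_image) (auto simp: inj_on_def)
    have disj: "(if a0 then {{}} else {}) \<inter> (\<lambda>i. {i}) ` B = {}" by auto
    have "card {S. S \<subseteq> {..<m} \<and> a' S \<and> (\<forall>i\<in>S. x ! i)} = (if a0 then 1 else 0) + card B"
      unfolding eq using card_Un_disjoint[OF _ _ disj] fB cB by simp
    then show "h x = odd (card {S. S \<subseteq> {..<m} \<and> a' S \<and> (\<forall>i\<in>S. x ! i)})"
      using h x unfolding B_def by auto
    qed
  qed
qed

lemma nl0_affine:
  assumes "nl m h = 0"
  shows "affine_fun m h"
proof -
  define T where "T = {card {x\<in>vecs m. h x \<noteq> l x} | l. affine_fun m l}"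
  have fv: "finite (vecs m)" unfolding vecs_def using finite_lists_length_eq[of "UNIV::bool set" m] by simp
  have "T \<subseteq> {..card (vecs m)}" unfolding T_def using fv by (auto intro: card_mono)
  then have fT: "finite T" using finite_subset by blast
  have "affine_fun m (\<lambda>_. False)" unfolding affine_fun_def by (rule exI[of _ False], rule exI[of _ "\<lambda>_. False"]) simp
  then have "T \<noteq> {}" unfolding T_def by blast
  then have "Min T \<in> T" using fT by simp
  moreover have "Min T = 0" using assms unfolding nl_def T_def by simp
  ultimately obtain l where l: "affine_fun m l" "card {x\<in>vecs m. h x \<noteq> l x} = 0"
    unfolding T_def by auto
  then have "{x\<in>vecs m. h x \<noteq> l x} = {}" using fv by simp
  then have "\<forall>x\<in>vecs m. h x = l x" by blast
  then show ?thesis using l(1) unfolding affine_fun_def by metis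
qed

lemma win_flip:
  assumes "i + b + 1 \<le> length z" "p < length z"
  shows "take (b+1) (drop i (flip p z)) =
    (if i \<le> p \<and> p \<le> i+b then flip (p-i) (take (b+1) (drop i z)) else take (b+1) (drop i z))"
  by (rule nth_equalityI) (use assms in \<open>auto simp: nth_flip\<close>)

lemma D2_win:
  assumes "i + b + 1 \<le> length z" "J < K" "K < length z"
  shows "D2 (\<lambda>z. f (take (b+1) (drop i z))) J K z =
    (if i \<le> J \<and> K \<le> i+b then D2 f (J-i) (K-i) (take (b+1) (drop i z)) else False)"
proof -
  have a: "take (b+1) (drop i (flip J z)) =
    (if i \<le> J \<and> J \<le> i+b then flip (J-i) (take (b+1) (drop i z)) else take (b+1) (drop i z))"
    using win_flip[OF assms(1)] assms by simp
  have b: "take (b+1) (drop i (flip K z)) =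
    (if i \<le> K \<and> K \<le> i+b then flip (K-i) (take (b+1) (drop i z)) else take (b+1) (drop i z))"
    using win_flip[OF assms(1)] assms by simp
  have c: "take (b+1) (drop i (flip K (flip J z))) =
    (if i \<le> K \<and> K \<le> i+b then flip (K-i) (take (b+1) (drop i (flip J z))) else take (b+1) (drop i (flip J z)))"
    using win_flip[of i b "flip J z" K] assms by simp
  show ?thesis unfolding D2_def a b c using assms(2) by auto
qed

lemma main_nonaffine:
  assumes na: "\<not> affine_fun (b+1) f" and si: "s i0" "i0 < b"
  shows "\<not> affine_fun (2*b) (\<lambda>z. odd (card {i \<in> {i. i<b \<and> s i}. f (take (b+1) (drop i z))}))"
    (is "\<not> affine_fun _ ?h")
proof
  assume ah: "affine_fun (2*b) ?h"
  define A where "A = {i. i<b \<and> s i}"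
  have fA: "finite A" unfolding A_def by simp
  define KS where "KS = {k. k < b+1 \<and> (\<exists>x\<in>vecs (b+1). \<exists>j<k. D2 f j k x)}"
  have "KS \<noteq> {}"
  proof
    assume "KS = {}"
    then have "\<forall>x\<in>vecs (b+1). \<forall>j k. j<k \<longrightarrow> k<b+1 \<longrightarrow> \<not> D2 f j k x"
      unfolding KS_def by blast
    then show False using D2_zero_affine na by blast
  qed
  moreover have fK: "finite KS" unfolding KS_def by simp
  ultimately have "Max KS \<in> KS" by simp
  define k0 where "k0 = Max KS"
  have kmax: "\<And>k. k \<in> KS \<Longrightarrow> k \<le> k0" unfolding k0_def using fK by simp
  obtain x0 j0 where x0: "length x0 = b+1" "j0 < k0" "k0 < b+1" "D2 f j0 k0 x0"
    using \<open>Max KS \<in> KS\<close> unfolding KS_def k0_def vecs_def by auto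
  have "A \<noteq> {}" "finite A" using si fA unfolding A_def by auto
  then have "Max A \<in> A" by simp
  define im where "im = Max A"
  have im: "im < b" "s im" using \<open>Max A \<in> A\<close> unfolding im_def A_def by auto
  have imax: "\<And>i. i \<in> A \<Longrightarrow> i \<le> im" unfolding im_def using fA by simp
  define z where "z = replicate im False @ x0 @ replicate (b - 1 - im) False"
  have lz: "length z = 2*b" unfolding z_def using x0 im by simp
  have wz: "take (b+1) (drop im z) = x0" unfolding z_def using x0 by simp
  define J where "J = j0 + im"
  define K where "K = k0 + im"
  have JK: "J < K" "K < 2*b" unfolding J_def K_def using x0 im by auto
  have "\<not> D2 ?h J K z" using affine_D2[OF ah lz] JK by simp
  moreover have "D2 ?h J K z = odd (card {i\<in>A. D2 (\<lambda>z. f (take (b+1) (drop i z))) J K z})"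
    unfolding D2_def A_def[symmetric] par_xor[OF fA] by (simp only: A_def)
  moreover have "{i\<in>A. D2 (\<lambda>z. f (take (b+1) (drop i z))) J K z} = {im}"
  proof (intro set_eqI iffI)
    fix i assume "i \<in> {i\<in>A. D2 (\<lambda>z. f (take (b+1) (drop i z))) J K z}"
    then have iA: "i \<in> A" and d: "D2 (\<lambda>z. f (take (b+1) (drop i z))) J K z" by auto
    have ib: "i + b + 1 \<le> length z" using iA lz unfolding A_def by auto
    have win: "i \<le> J \<and> K \<le> i+b" and d2: "D2 f (J-i) (K-i) (take (b+1) (drop i z))"
      using d D2_win[OF ib JK(1)] JK lz by (auto split: if_splits)
    show "i \<in> {im}"
    proof (rule ccontr)
      assume "i \<notin> {im}"
      then have "i < im" using imax[OF iA] by simp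
      have lw: "take (b+1) (drop i z) \<in> vecs (b+1)" using ib unfolding vecs_def by simp
      have jk': "J - i < K - i" "K - i < b + 1" using win JK by auto
      have "K - i \<in> KS" unfolding KS_def using lw jk' d2 by blast
      then have "K - i \<le> k0" by (rule kmax)
      then show False using \<open>i < im\<close> win unfolding K_def by simp
    qed
  next
    fix i assume "i \<in> {im}"
    then have i: "i = im" by simp
    have ib: "im + b + 1 \<le> length z" using im lz by auto
    have "D2 (\<lambda>z. f (take (b+1) (drop im z))) J K z"
      using D2_win[OF ib JK(1)] JK lz wz x0 by (simp add: J_def K_def)
    then show "i \<in> {i\<in>A. D2 (\<lambda>z. f (take (b+1) (drop i z))) J K z}"
      using i im unfolding A_def by simp
  qed
  ultimately show False by simp
qed

lemma affine_cong:
  assumes "\<forall>x\<in>vecs m. h x = h' x" "affine_fun m h"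
  shows "affine_fun m h'"
  using assms unfolding affine_fun_def by metis

lemma sbox_nth:
  assumes "length z = 2*b" "i < 2*b"
  shows "sbox b f g z ! i = (if i < b then f (take (b+1) (drop i z)) else g (take (b+1) (drop (i-b) z)))"
  using assms by (auto simp: sbox_def nbca_def nth_append)

lemma deg_nonaffine:
  assumes "alg_degree m f \<ge> 2"
  shows "\<not> affine_fun m f"
proof
  assume "affine_fun m f"
  then have "alg_deg_le m f 1" by (rule affine_deg1)
  then have "alg_degree m f \<le> 1" unfolding alg_degree_def by (rule Least_le)
  then show False using assms by simp
qed

theorem lemma2:
  fixes b :: nat and f g :: "bool list \<Rightarrow> bool" and v :: "bool list"
  assumes "b \<ge> 1"
    and "bipermutive (b + 1) f" and "bipermutive (b + 1) g"
    and "alg_degree (b + 1) f \<ge> 2" and "alg_degree (b + 1) g \<ge> 2"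
    and "orthogonal_ca b f g"
    and "v \<in> vecs (2 * b)" and "\<exists>i < 2 * b. v ! i"
    and "nl (2 * b) (component (2 * b) v (sbox b f g)) = 0"
  shows "(\<exists>i < b. v ! i) \<and> (\<exists>i. b \<le> i \<and> i < 2 * b \<and> v ! i)"
proof -
  have nf: "\<not> affine_fun (b+1) f" using deg_nonaffine assms(4) by blast
  have ng: "\<not> affine_fun (b+1) g" using deg_nonaffine assms(5) by blast
  have ac: "affine_fun (2*b) (component (2 * b) v (sbox b f g))" using nl0_affine assms(9) by blast
  obtain i0 where i0: "i0 < 2*b" "v ! i0" using assms(8) by blast
  show ?thesis
  proof (rule conjI; rule ccontr)
    assume no: "\<not> (\<exists>i<b. v ! i)"
    then have bi: "b \<le> i0" using i0 by (cases "i0 < b") auto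
    define s where "s i = v ! (i + b)" for i
    have s0: "s (i0 - b)" "i0 - b < b" using bi i0 unfolding s_def by auto
    have "\<forall>z\<in>vecs (2*b). component (2 * b) v (sbox b f g) z =
        odd (card {i \<in> {i. i<b \<and> s i}. g (take (b+1) (drop i z))})"
    proof
      fix z assume "z \<in> vecs (2*b)"
      then have lz: "length z = 2*b" unfolding vecs_def by simp
      have "{i. i < 2*b \<and> v ! i \<and> sbox b f g z ! i} =
          (\<lambda>i. i + b) ` {i \<in> {i. i<b \<and> s i}. g (take (b+1) (drop i z))}"
      proof (intro set_eqI iffI)
        fix i assume "i \<in> {i. i < 2*b \<and> v ! i \<and> sbox b f g z ! i}"
        then have h: "i < 2*b" "v ! i" "sbox b f g z ! i" by auto
        then have "b \<le> i" using no by (cases "i < b") auto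
        have g1: "g (take (b+1) (drop (i-b) z))" using h(3) sbox_nth[OF lz h(1)] \<open>b \<le> i\<close> by simp
        have g2: "i - b < b" using h(1) \<open>b \<le> i\<close> by simp
        have g3: "s (i - b)" unfolding s_def using h(2) \<open>b \<le> i\<close> by simp
        have "i - b \<in> {i \<in> {i. i<b \<and> s i}. g (take (b+1) (drop i z))}"
          using g1 g2 g3 by blast
        moreover have "i = (i - b) + b" using \<open>b \<le> i\<close> by simp
        ultimately show "i \<in> (\<lambda>i. i + b) ` {i \<in> {i. i<b \<and> s i}. g (take (b+1) (drop i z))}"
          by (rule rev_image_eqI)
      next
        fix i assume "i \<in> (\<lambda>i. i + b) ` {i \<in> {i. i<b \<and> s i}. g (take (b+1) (drop i z))}"
        then obtain k where k: "i = k + b" "k < b" "s k" "g (take (b+1) (drop k z))" by auto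
        have "i < 2*b" using k by simp
        moreover have "sbox b f g z ! i" using sbox_nth[OF lz \<open>i < 2*b\<close>, of f g] k by simp
        moreover have "v ! i" using k unfolding s_def by simp
        ultimately show "i \<in> {i. i < 2*b \<and> v ! i \<and> sbox b f g z ! i}" by blast
      qed
      moreover have "card ((\<lambda>i. i + b) ` {i \<in> {i. i<b \<and> s i}. g (take (b+1) (drop i z))}) =
          card {i \<in> {i. i<b \<and> s i}. g (take (b+1) (drop i z))}"
        by (rule card_image) (auto simp: inj_on_def)
      ultimately show "component (2 * b) v (sbox b f g) z =
        odd (card {i \<in> {i. i<b \<and> s i}. g (take (b+1) (drop i z))})"
        unfolding component_def by simp
    qed
    then have "affine_fun (2*b) (\<lambda>z. odd (card {i \<in> {i. i<b \<and> s i}. g (take (b+1) (drop i z))}))"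
      by (rule affine_cong[OF _ ac])
    with main_nonaffine[of b g s "i0 - b", OF ng s0] show False by (rule notE)
  next
    assume no: "\<not> (\<exists>i. b \<le> i \<and> i < 2 * b \<and> v ! i)"
    then have bi: "i0 < b" using i0 by (cases "i0 < b") auto
    have "\<forall>z\<in>vecs (2*b). component (2 * b) v (sbox b f g) z =
        odd (card {i \<in> {i. i<b \<and> v ! i}. f (take (b+1) (drop i z))})"
    proof
      fix z assume "z \<in> vecs (2*b)"
      then have lz: "length z = 2*b" unfolding vecs_def by simp
      have "{i. i < 2*b \<and> v ! i \<and> sbox b f g z ! i} =
          {i \<in> {i. i<b \<and> v ! i}. f (take (b+1) (drop i z))}"
      proof (intro set_eqI iffI)
        fix i assume "i \<in> {i. i < 2*b \<and> v ! i \<and> sbox b f g z ! i}"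
        then have h: "i < 2*b" "v ! i" "sbox b f g z ! i" by auto
        then have "i < b" using no by (cases "i < b") auto
        then show "i \<in> {i \<in> {i. i<b \<and> v ! i}. f (take (b+1) (drop i z))}"
          using h sbox_nth[OF lz h(1)] by simp
      next
        fix i assume "i \<in> {i \<in> {i. i<b \<and> v ! i}. f (take (b+1) (drop i z))}"
        then have k: "i < b" "v ! i" "f (take (b+1) (drop i z))" by auto
        have "i < 2*b" using k by simp
        moreover have "sbox b f g z ! i" using sbox_nth[OF lz \<open>i < 2*b\<close>, of f g] k by simp
        ultimately show "i \<in> {i. i < 2*b \<and> v ! i \<and> sbox b f g z ! i}" using k by blast
      qed
      then show "component (2 * b) v (sbox b f g) z =
        odd (card {i \<in> {i. i<b \<and> v ! i}. f (take (b+1) (drop i z))})"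
        unfolding component_def by simp
    qed
    then have "affine_fun (2*b) (\<lambda>z. odd (card {i \<in> {i. i<b \<and> v ! i}. f (take (b+1) (drop i z))}))"
      by (rule affine_cong[OF _ ac])
    with main_nonaffine[of b f "\<lambda>i. v ! i" i0, OF nf i0(2) bi] show False by (rule notE)
  qed
qed

end
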